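(* Let $n\ge 2$ and let $L$ be a totally real Galois extension of $\mathbb{Q}$ with $\operatorname{Gal}(L/\mathbb{Q})\cong(\mathbb{Z}/2\mathbb{Z})^n$. Let $E\subset\mathcal{O}_L^*$ be the subgroup generated by the fundamental units $u_K>1$ of the $2^n-1$ quadratic subfields $K$ of $L$. Then every nonzero $w\in\bigwedge^2\operatorname{LOG}(E)$ satisfies \[ \|w\|_1 \geq 2^{2n-1}\log\left(\frac{1+\sqrt5}{2}\right)\log(1+\sqrt2). \]
   Context: For a number field $L$, let $\mathcal{A}_L$ be its set of Archimedean places. Define $\operatorname{LOG}:\mathcal{O}_L^* \to \mathbb{R}^{\mathcal{A}_L}$ by $(\operatorname{LOG}(\gamma))_v = e_v \log|\gamma|_v$, where $e_v=1$ if $v$ is real and $e_v=2$ if $v$ is complex. Let $\{\delta^v\}$ be the standard orthonormal basis of $\mathbb{R}^{\mathcal{A}_L}$; for each $2$-element subset $I=\{v_1,v_2\}$ of $\mathcal{A}_L$ (with a fixed ordering) put $\delta^I=\delta^{v_1}\wedge\delta^{v_2}$. For $w=\sum_I c_I\delta^I\in\bigwedge^2\mathbb{R}^{\mathcal{A}_L}$, $\|w\|_1=\sum_I|c_I|$. The fundamental unit $u_K>1$ of a real quadratic subfield $K$ (with $L$ embedded in $\mathbb{R}$) generates the units of $K$ modulo $\pm1$. $\bigwedge^2\operatorname{LOG}(E)$ is the subgroup of $\bigwedge^2\mathbb{R}^{\mathcal{A}_L}$ generated by $\operatorname{LOG}(\epsilon_1)\wedge\operatorname{LOG}(\epsilon_2)$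 for $\epsilon_1,\epsilon_2\in E$. *)

theory Defs
  imports "HOL-Analysis.Analysis" "HOL-Computational_Algebra.Polynomial"
          "HOL-Algebra.Product_Groups" "HOL-Algebra.Elementary_Groups" "HOL-Library.Function_Algebras"
begin

definition real_subfield :: "real set \<Rightarrow> bool" where
  "real_subfield K \<longleftrightarrow> 0 \<in> K \<and> 1 \<in> K \<and>
     (\<forall>x\<in>K. \<forall>y\<in>K. x + y \<in> K \<and> x - y \<in> K \<and> x * y \<in> K) \<and>
     (\<forall>x\<in>K. x \<noteq> 0 \<longrightarrow> inverse x \<in> K)"

definition rat_scale :: "rat \<Rightarrow> real \<Rightarrow> real" where
  "rat_scale r x = of_rat r * x"

definition field_degree :: "real set \<Rightarrow> nat" where
  "field_degree K = vector_space.dim rat_scale K"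

definition number_field :: "real set \<Rightarrow> bool" where
  "number_field K \<longleftrightarrow> real_subfield K \<and>
     (\<exists>B. finite B \<and> module.independent rat_scale B \<and> module.span rat_scale B = K)"

definition embeddings :: "real set \<Rightarrow> (real \<Rightarrow> complex) set" where
  "embeddings K = {\<sigma>. \<sigma> 1 = 1 \<and>
      (\<forall>x\<in>K. \<forall>y\<in>K. \<sigma> (x + y) = \<sigma> x + \<sigma> y \<and> \<sigma> (x * y) = \<sigma> x * \<sigma> y) \<and>
      (\<forall>x. x \<notin> K \<longrightarrow> \<sigma> x = 0)}"

definition totally_real :: "real set \<Rightarrow> bool" where
  "totally_real K \<longleftrightarrow> (\<forall>\<sigma>\<in>embeddings K. \<forall>x\<in>K. \<sigma> x \<in> \<real>)"

text \<open>Automorphisms of K (automatically fixing Q), extensional.\<close>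
definition automorphisms :: "real set \<Rightarrow> (real \<Rightarrow> real) set" where
  "automorphisms K = {\<sigma>. \<sigma> 1 = 1 \<and>
      (\<forall>x\<in>K. \<forall>y\<in>K. \<sigma> (x + y) = \<sigma> x + \<sigma> y \<and> \<sigma> (x * y) = \<sigma> x * \<sigma> y) \<and>
      bij_betw \<sigma> K K \<and> (\<forall>x. x \<notin> K \<longrightarrow> \<sigma> x = 0)}"

definition galois_group :: "real set \<Rightarrow> (real \<Rightarrow> real) monoid" where
  "galois_group K = \<lparr>carrier = automorphisms K,
      monoid.mult = (\<lambda>\<sigma> \<tau>. \<lambda>x. if x \<in> K then \<sigma> (\<tau> x) else 0),
      one = (\<lambda>x. if x \<in> K then x else 0)\<rparr>"

definition galois_over_Q :: "real set \<Rightarrow> bool" where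
  "galois_over_Q K \<longleftrightarrow> card (automorphisms K) = field_degree K"

definition Z2_power :: "nat \<Rightarrow> (nat \<Rightarrow> int) monoid" where
  "Z2_power n = product_group {..<n} (\<lambda>_. integer_mod_group 2)"

definition units_of_ring_of_integers :: "real set \<Rightarrow> real set" where
  "units_of_ring_of_integers K =
     {x \<in> K. x \<noteq> 0 \<and> algebraic_int x \<and> algebraic_int (inverse x)}"

definition quadratic_subfield :: "real set \<Rightarrow> real set \<Rightarrow> bool" where
  "quadratic_subfield L K \<longleftrightarrow> real_subfield K \<and> K \<subseteq> L \<and> field_degree K = 2"

definition fundamental_unit :: "real set \<Rightarrow> real \<Rightarrow> bool" where
  "fundamental_unit K u \<longleftrightarrow> u \<in> units_of_ring_of_integers K \<and> u > 1 \<and>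
     (\<forall>e\<in>units_of_ring_of_integers K. \<exists>k::int. e = u powi k \<or> e = - (u powi k))"

inductive_set mult_subgroup_gen :: "real set \<Rightarrow> real set" for S where
  one: "1 \<in> mult_subgroup_gen S"
| gen: "s \<in> S \<Longrightarrow> s \<in> mult_subgroup_gen S"
| mult: "x \<in> mult_subgroup_gen S \<Longrightarrow> y \<in> mult_subgroup_gen S \<Longrightarrow> x * y \<in> mult_subgroup_gen S"
| inv: "x \<in> mult_subgroup_gen S \<Longrightarrow> inverse x \<in> mult_subgroup_gen S"

definition fundamental_unit_group :: "real set \<Rightarrow> real set" where
  "fundamental_unit_group L =
     mult_subgroup_gen {u. \<exists>K. quadratic_subfield L K \<and> fundamental_unit K u}"

text \<open>A place is the set {sigma, conj o sigma} of embeddings inducing it.\<close>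
definition arch_places :: "real set \<Rightarrow> (real \<Rightarrow> complex) set set" where
  "arch_places K = (\<lambda>\<sigma>. {\<sigma>, cnj \<circ> \<sigma>}) ` embeddings K"

definition place_e :: "(real \<Rightarrow> complex) set \<Rightarrow> real" where
  "place_e v = (if card v = 1 then 1 else 2)"

definition LOG :: "real set \<Rightarrow> real \<Rightarrow> (real \<Rightarrow> complex) set \<Rightarrow> real" where
  "LOG K \<gamma> v = (if v \<in> arch_places K then place_e v * ln (cmod ((SOME \<sigma>. \<sigma> \<in> v) \<gamma>)) else 0)"

text \<open>An element sum_I c_I delta^I of Lambda^2 R^A is represented by the antisymmetric
  coefficient function c(v1,v2) = c_{v1,v2} = - c(v2,v1) (zero on the diagonal).\<close>
definition wedge :: "('p \<Rightarrow> real) \<Rightarrow> ('p \<Rightarrow> real) \<Rightarrow> ('p \<Rightarrow> 'p \<Rightarrow> real)" where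
  "wedge a b = (\<lambda>v1 v2. a v1 * b v2 - a v2 * b v1)"

text \<open>||w||_1 = sum over 2-element subsets I of |c_I| = half of the sum over ordered pairs.\<close>
definition wedge_norm1 :: "'p set \<Rightarrow> ('p \<Rightarrow> 'p \<Rightarrow> real) \<Rightarrow> real" where
  "wedge_norm1 A w = (\<Sum>v1\<in>A. \<Sum>v2\<in>A. \<bar>w v1 v2\<bar>) / 2"

inductive_set add_subgroup_gen :: "('p \<Rightarrow> 'p \<Rightarrow> real) set \<Rightarrow> ('p \<Rightarrow> 'p \<Rightarrow> real) set" for S where
  zero: "0 \<in> add_subgroup_gen S"
| gen: "s \<in> S \<Longrightarrow> s \<in> add_subgroup_gen S"
| add: "x \<in> add_subgroup_gen S \<Longrightarrow> y \<in> add_subgroup_gen S \<Longrightarrow> x + y \<in> add_subgroup_gen S"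
| neg: "x \<in> add_subgroup_gen S \<Longrightarrow> - x \<in> add_subgroup_gen S"

definition wedge2_LOG :: "real set \<Rightarrow> real set \<Rightarrow> ((real \<Rightarrow> complex) set \<Rightarrow> (real \<Rightarrow> complex) set \<Rightarrow> real) set" where
  "wedge2_LOG L E = add_subgroup_gen {wedge (LOG L e1) (LOG L e2) | e1 e2. e1 \<in> E \<and> e2 \<in> E}"

end

theory Submission
  imports Defs "HOL-Computational_Algebra.Polynomial_Factorial"
begin

definition rhom :: "real set \<Rightarrow> (real \<Rightarrow> real) \<Rightarrow> bool" where
  "rhom K \<rho> \<longleftrightarrow> \<rho> 1 = 1 \<and> (\<forall>x\<in>K. \<forall>y\<in>K. \<rho> (x+y) = \<rho> x + \<rho> y \<and> \<rho> (x*y) = \<rho> x * \<rho> y)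
     \<and> (\<forall>x. x \<notin> K \<longrightarrow> \<rho> x = 0)"

context fixes K assumes sf: "real_subfield K" begin

lemma sf_0: "0 \<in> K" and sf_1: "1 \<in> K"
  using sf by (auto simp: real_subfield_def)
lemma sf_add: "x \<in> K \<Longrightarrow> y \<in> K \<Longrightarrow> x + y \<in> K"
  and sf_diff: "x \<in> K \<Longrightarrow> y \<in> K \<Longrightarrow> x - y \<in> K"
  and sf_mult: "x \<in> K \<Longrightarrow> y \<in> K \<Longrightarrow> x * y \<in> K"
  using sf by (auto simp: real_subfield_def)
lemma sf_inverse: "x \<in> K \<Longrightarrow> inverse x \<in> K"
  using sf by (cases "x = 0") (auto simp: real_subfield_def)
lemma sf_minus: "x \<in> K \<Longrightarrow> - x \<in> K"
  using sf_diff[of 0 x] sf_0 by simp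
lemma sf_divide: "x \<in> K \<Longrightarrow> y \<in> K \<Longrightarrow> x / y \<in> K"
  by (simp add: divide_inverse sf_mult sf_inverse)
lemma sf_of_nat: "of_nat n \<in> K"
  by (induction n) (auto simp: sf_0 sf_1 sf_add)
lemma sf_of_int: "of_int k \<in> K"
proof (cases "k \<ge> 0")
  case True then show ?thesis using sf_of_nat[of "nat k"] by simp
next
  case False then show ?thesis using sf_minus[OF sf_of_nat[of "nat (-k)"]] by simp
qed
lemma sf_Rats: "x \<in> \<rat> \<Longrightarrow> x \<in> K"
  by (erule Rats_cases') (auto intro!: sf_divide sf_of_int)
lemma sf_of_rat: "of_rat r \<in> K"
  by (rule sf_Rats) simp
lemma sf_power: "x \<in> K \<Longrightarrow> x ^ n \<in> K"
  by (induction n) (auto simp: sf_1 sf_mult)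
lemma sf_sum: "finite A \<Longrightarrow> (\<And>a. a \<in> A \<Longrightarrow> f a \<in> K) \<Longrightarrow> sum f A \<in> K"
  by (induction A rule: finite_induct) (auto simp: sf_0 sf_add)

context fixes \<rho> assumes rh: "rhom K \<rho>" begin
lemma rh_1: "\<rho> 1 = 1" using rh by (simp add: rhom_def)
lemma rh_add: "x \<in> K \<Longrightarrow> y \<in> K \<Longrightarrow> \<rho> (x+y) = \<rho> x + \<rho> y"
  and rh_mult: "x \<in> K \<Longrightarrow> y \<in> K \<Longrightarrow> \<rho> (x*y) = \<rho> x * \<rho> y"
  using rh by (auto simp: rhom_def)
lemma rh_out: "x \<notin> K \<Longrightarrow> \<rho> x = 0" using rh by (simp add: rhom_def)
lemma rh_0: "\<rho> 0 = 0"
  using rh_add[OF sf_0 sf_0] by simp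
lemma rh_minus: "x \<in> K \<Longrightarrow> \<rho> (-x) = - \<rho> x"
  using rh_add[OF _ sf_minus, of x x] rh_0 by (simp add: eq_neg_iff_add_eq_0)
lemma rh_diff: "x \<in> K \<Longrightarrow> y \<in> K \<Longrightarrow> \<rho> (x-y) = \<rho> x - \<rho> y"
  using rh_add[OF _ sf_minus, of x y] rh_minus[of y] by simp
lemma rh_of_nat: "\<rho> (of_nat n) = of_nat n"
  by (induction n) (auto simp: rh_0 rh_1 rh_add[OF sf_1 sf_of_nat])
lemma rh_of_int: "\<rho> (of_int k) = of_int k"
proof (cases "k \<ge> 0")
  case True then show ?thesis using rh_of_nat[of "nat k"] by simp
next
  case False then show ?thesis using rh_minus[OF sf_of_nat[of "nat (-k)"]] rh_of_nat[of "nat (-k)"] by simp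
qed
lemma rh_inverse: "x \<in> K \<Longrightarrow> x \<noteq> 0 \<Longrightarrow> \<rho> (inverse x) = inverse (\<rho> x) \<and> \<rho> x \<noteq> 0"
proof -
  assume x: "x \<in> K" "x \<noteq> 0"
  have "\<rho> x * \<rho> (inverse x) = 1"
    using rh_mult[OF x(1) sf_inverse[OF x(1)]] x rh_1 by simp
  then show ?thesis by (metis inverse_unique mult_zero_left zero_neq_one)
qed
lemma rh_divide: "x \<in> K \<Longrightarrow> y \<in> K \<Longrightarrow> \<rho> (x / y) = \<rho> x / \<rho> y"
  by (cases "y = 0") (auto simp: divide_inverse rh_mult[OF _ sf_inverse] rh_inverse rh_0)
lemma rh_Rats: "x \<in> \<rat> \<Longrightarrow> \<rho> x = x"
  by (erule Rats_cases') (auto simp: rh_divide sf_of_int rh_of_int)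
lemma rh_power: "x \<in> K \<Longrightarrow> \<rho> (x ^ n) = \<rho> x ^ n"
  by (induction n) (auto simp: rh_1 rh_mult sf_power)
lemma rh_sum: "finite A \<Longrightarrow> (\<And>a. a \<in> A \<Longrightarrow> f a \<in> K) \<Longrightarrow> \<rho> (sum f A) = (\<Sum>a\<in>A. \<rho> (f a))"
  by (induction A rule: finite_induct) (auto simp: rh_0 rh_add sf_sum)
lemma rh_ratmult: "x \<in> K \<Longrightarrow> \<rho> (of_rat r * x) = of_rat r * \<rho> x"
  by (simp add: rh_mult sf_of_rat rh_Rats)
end
end

lemma rhom_eqI: "rhom K \<rho> \<Longrightarrow> rhom K \<tau> \<Longrightarrow> (\<And>x. x \<in> K \<Longrightarrow> \<rho> x = \<tau> x) \<Longrightarrow> \<rho> = \<tau>"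
  by (rule ext) (metis rhom_def)

lemma dedekind:
  assumes sf: "real_subfield K" and "finite S" and "S \<subseteq> {\<rho>. rhom K \<rho>}"
    and "\<forall>x\<in>K. (\<Sum>\<rho>\<in>S. c \<rho> * \<rho> x) = 0"
  shows "\<forall>\<rho>\<in>S. c \<rho> = 0"
  using assms(2-4)
proof (induction S arbitrary: c rule: finite_induct)
  case empty then show ?case by simp
next
  case (insert \<sigma> S)
  have rs: "rhom K \<sigma>" using insert.prems by auto
  have hyp: "c \<sigma> * \<sigma> x + (\<Sum>\<rho>\<in>S. c \<rho> * \<rho> x) = 0" if "x \<in> K" for x
    using insert.prems(2) that insert.hyps by simp
  have cS: "c \<tau> = 0" if t: "\<tau> \<in> S" for \<tau>
  proof -
    have rt: "rhom K \<tau>" using insert.prems t by auto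
    have "\<tau> \<noteq> \<sigma>" using t insert.hyps by auto
    then obtain z where z: "z \<in> K" "\<tau> z \<noteq> \<sigma> z" using rhom_eqI[OF rt rs] by blast
    define c' where "c' \<rho> = c \<rho> * (\<rho> z - \<sigma> z)" for \<rho>
    have "\<forall>x\<in>K. (\<Sum>\<rho>\<in>S. c' \<rho> * \<rho> x) = 0"
    proof
      fix x assume x: "x \<in> K"
      have zx: "z * x \<in> K" using sf_mult[OF sf z(1) x] .
      have e1: "(\<Sum>\<rho>\<in>S. c \<rho> * \<rho> (z*x)) = (\<Sum>\<rho>\<in>S. c \<rho> * \<rho> z * \<rho> x)"
        apply (rule sum.cong, simp)
        using insert.prems(1) rh_mult[OF sf _ z(1) x] by auto
      have e2: "\<sigma> (z*x) = \<sigma> z * \<sigma> x" using rh_mult[OF sf rs z(1) x] .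
      have "(\<Sum>\<rho>\<in>S. c' \<rho> * \<rho> x) = (\<Sum>\<rho>\<in>S. c \<rho> * \<rho> z * \<rho> x - \<sigma> z * (c \<rho> * \<rho> x))"
        by (rule sum.cong) (simp_all add: c'_def algebra_simps)
      also have "\<dots> = (\<Sum>\<rho>\<in>S. c \<rho> * \<rho> z * \<rho> x) - \<sigma> z * (\<Sum>\<rho>\<in>S. c \<rho> * \<rho> x)"
        by (simp only: sum_subtractf sum_distrib_left)
      also have "\<dots> = - (c \<sigma> * \<sigma> (z*x)) - \<sigma> z * (- (c \<sigma> * \<sigma> x))"
      proof -
        have a: "(\<Sum>\<rho>\<in>S. c \<rho> * \<rho> x) = - (c \<sigma> * \<sigma> x)" using hyp[OF x] by linarith
        have b: "(\<Sum>\<rho>\<in>S. c \<rho> * \<rho> z * \<rho> x) = - (c \<sigma> * \<sigma> (z*x))" using hyp[OF zx] e1 by linarith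
        show ?thesis by (simp only: a b)
      qed
      also have "\<dots> = 0" using e2 by simp
      finally show "(\<Sum>\<rho>\<in>S. c' \<rho> * \<rho> x) = 0" .
    qed
    then have "c' \<tau> = 0" using insert.IH[of c'] insert.prems(1) t by auto
    then show ?thesis using z(2) by (simp add: c'_def)
  qed
  then have "c \<sigma> * \<sigma> 1 = 0" using hyp[OF sf_1[OF sf]] by simp
  then have "c \<sigma> = 0" using rh_1[OF sf rs] by simp
  then show ?case using cS by auto
qed

interpretation Q: vector_space rat_scale
  by unfold_locales (auto simp: rat_scale_def algebra_simps of_rat_add of_rat_mult)

definition fscale :: "real \<Rightarrow> (real \<Rightarrow> real) \<Rightarrow> (real \<Rightarrow> real)" where
  "fscale r f = (\<lambda>x. r * f x)"

interpretation FV: vector_space fscale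
  by unfold_locales (auto simp: fscale_def fun_eq_iff algebra_simps)

lemma sum_fun_apply: "(sum F A) x = (\<Sum>a\<in>A. F a x)"
  by (induction A rule: infinite_finite_induct) auto

lemma rat_subfield: "real_subfield K \<Longrightarrow> Q.subspace K"
  unfolding Q.subspace_def
  by (auto simp: rat_scale_def sf_0 sf_add sf_mult sf_of_rat)

locale nf =
  fixes L B
  assumes sf: "real_subfield L" and finB: "finite B" and indB: "Q.independent B"
      and spanB: "Q.span B = L"
begin

definition "H = {\<rho>. rhom L \<rho>}"
definition "coord b = (\<lambda>x. of_rat (Q.representation B x b) :: real)"

lemma B_sub: "B \<subseteq> L" using spanB Q.span_superset by blast

lemma dimL: "field_degree L = card B"
  unfolding field_degree_def using Q.dim_span_eq_card_independent[OF indB] spanB by simp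

lemma repr_sum: "x \<in> L \<Longrightarrow> (\<Sum>b\<in>B. rat_scale (Q.representation B x b) b) = x"
  using Q.sum_representation_eq[OF indB _ finB] spanB by auto

lemma repr_out: "x \<notin> L \<Longrightarrow> Q.representation B x b = 0"
  using spanB by (simp add: Q.representation_def)

lemma rhom_expand:
  assumes r: "rhom L \<rho>"
  shows "\<rho> = (\<Sum>b\<in>B. fscale (\<rho> b) (coord b))"
proof (rule ext)
  fix x
  show "\<rho> x = (\<Sum>b\<in>B. fscale (\<rho> b) (coord b)) x"
  proof (cases "x \<in> L")
    case True
    have "\<rho> x = \<rho> (\<Sum>b\<in>B. rat_scale (Q.representation B x b) b)" using repr_sum[OF True] by simp
    also have "\<dots> = (\<Sum>b\<in>B. \<rho> (rat_scale (Q.representation B x b) b))"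
      unfolding rat_scale_def
      by (rule rh_sum[OF sf r finB]) (use B_sub in \<open>auto intro!: sf_mult[OF sf sf_of_rat[OF sf]]\<close>)
    also have "\<dots> = (\<Sum>b\<in>B. of_rat (Q.representation B x b) * \<rho> b)"
      using rh_ratmult[OF sf r] B_sub by (auto simp: rat_scale_def intro!: sum.cong)
    finally show ?thesis by (simp add: sum_fun_apply fscale_def coord_def mult.commute)
  next
    case False
    then show ?thesis using rh_out[OF sf r False] repr_out[OF False]
      by (simp add: sum_fun_apply fscale_def coord_def)
  qed
qed

lemma H_span: "H \<subseteq> FV.span (coord ` B)"
proof
  fix \<rho> assume "\<rho> \<in> H"
  then have "\<rho> = (\<Sum>b\<in>B. fscale (\<rho> b) (coord b))" using rhom_expand H_def by auto
  also have "\<dots> \<in> FV.span (coord ` B)"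
    by (intro FV.span_sum FV.span_scale FV.span_base) auto
  finally show "\<rho> \<in> FV.span (coord ` B)" .
qed

lemma H_indep: "FV.independent H"
  unfolding FV.independent_explicit_finite_subsets
proof (intro allI impI ballI)
  fix S u v assume S: "S \<subseteq> H" "finite S" and eq: "(\<Sum>v\<in>S. fscale (u v) v) = 0" and v: "v \<in> S"
  have "\<forall>x\<in>L. (\<Sum>\<rho>\<in>S. u \<rho> * \<rho> x) = 0"
  proof
    fix x show "(\<Sum>\<rho>\<in>S. u \<rho> * \<rho> x) = 0"
      using fun_cong[OF eq, of x] by (simp add: sum_fun_apply fscale_def)
  qed
  moreover have "S \<subseteq> {\<rho>. rhom L \<rho>}" using S(1) by (simp add: H_def)
  ultimately have "\<forall>\<rho>\<in>S. u \<rho> = 0" by (intro dedekind[OF sf S(2)])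
  then show "u v = 0" using v by blast
qed

lemma H_finite: "finite H" and H_card: "card H \<le> card B"
proof -
  have "finite H \<and> card H \<le> card (coord ` B)"
    using FV.independent_span_bound[OF _ H_indep H_span] finB by auto
  moreover have "card (coord ` B) \<le> card B" using card_image_le finB by auto
  ultimately show "finite H" "card H \<le> card B" by auto
qed

lemma coord_span:
  assumes "S \<subseteq> H" "card B \<le> card S"
  shows "coord ` B \<subseteq> FV.span S"
proof
  fix c assume c: "c \<in> coord ` B"
  show "c \<in> FV.span S"
  proof (rule ccontr)
    assume nc: "c \<notin> FV.span S"
    have iS: "FV.independent S" using FV.independent_mono[OF H_indep assms(1)] .
    have fS: "finite S" using assms(1) H_finite finite_subset by blast
    have i2: "FV.independent (insert c S)" using FV.independent_insertI[OF nc iS] .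
    have "insert c S \<subseteq> FV.span (coord ` B)"
      using assms(1) H_span c FV.span_base by blast
    then have "card (insert c S) \<le> card (coord ` B)"
      using FV.independent_span_bound[OF _ i2] finB by auto
    also have "\<dots> \<le> card B" using card_image_le finB by auto
    also have "\<dots> \<le> card S" by fact
    finally show False using fS nc FV.span_base[of c S] by (auto simp: card_insert_if split: if_splits)
  qed
qed

lemma artin:
  assumes S: "S \<subseteq> H" "card B \<le> card S" and Y: "Y \<in> L" "Y \<notin> \<rat>"
  shows "\<exists>\<tau>\<in>S. \<tau> Y \<noteq> Y"
proof (rule ccontr)
  assume "\<not> ?thesis"
  then have fixY: "\<And>\<tau>. \<tau> \<in> S \<Longrightarrow> \<tau> Y = Y" by auto
  define W where "W = {g. \<forall>x\<in>L. g (Y*x) = Y * g x}"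
  have sW: "FV.subspace W"
    unfolding FV.subspace_def W_def by (auto simp: fscale_def algebra_simps)
  have "S \<subseteq> W"
  proof
    fix \<tau> assume t: "\<tau> \<in> S"
    then have r: "rhom L \<tau>" using S H_def by auto
    show "\<tau> \<in> W" unfolding W_def using rh_mult[OF sf r Y(1)] fixY[OF t] by auto
  qed
  then have "FV.span S \<subseteq> W" using FV.span_minimal[OF _ sW] by blast
  then have cW: "coord b \<in> W" if "b \<in> B" for b using coord_span[OF S] that by blast
  have "1 = (\<Sum>b\<in>B. rat_scale (Q.representation B 1 b) b)" using repr_sum[OF sf_1[OF sf]] by simp
  then obtain b where b: "b \<in> B" "Q.representation B 1 b \<noteq> 0"
    by (metis (no_types, lifting) rat_scale_def of_rat_0 mult_zero_left sum.neutral zero_neq_one)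
  have "coord b (Y * 1) = Y * coord b 1" using cW[OF b(1)] sf_1[OF sf] unfolding W_def by blast
  then have "Y = coord b Y / coord b 1" using b(2) by (simp add: coord_def)
  moreover have "coord b Y / coord b 1 \<in> \<rat>" by (simp add: coord_def)
  ultimately show False using Y(2) by simp
qed

end

lemma map_rat_add: "map_poly (of_rat :: rat \<Rightarrow> real) (p + q) = map_poly of_rat p + map_poly of_rat q"
  by (rule poly_eqI) (simp add: coeff_map_poly of_rat_add)
lemma map_rat_mult: "map_poly (of_rat :: rat \<Rightarrow> real) (p * q) = map_poly of_rat p * map_poly of_rat q"
  by (rule poly_eqI) (simp add: coeff_map_poly coeff_mult of_rat_sum of_rat_mult)
lemma map_int_mult: "map_poly (of_int :: int \<Rightarrow> rat) (p * q) = map_poly of_int p * map_poly of_int q"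
  by (rule poly_eqI) (simp add: coeff_map_poly coeff_mult)
lemma map_int_inj: "map_poly (of_int :: int \<Rightarrow> rat) p = map_poly of_int q \<Longrightarrow> p = q"
  by (rule poly_eqI) (metis coeff_map_poly of_int_0 of_int_eq_iff)

lemma clear_denoms: "\<exists>d::int. d > 0 \<and> (\<exists>Q. map_poly of_int Q = smult (of_int d) (q :: rat poly))"
proof (induction q)
  case 0 then show ?case by (intro exI[of _ 1]) (auto intro!: exI[of _ 0])
next
  case (pCons c q)
  then obtain d Q where dQ: "d > 0" "map_poly of_int Q = smult (of_int d) q" by blast
  obtain n k where nk: "quotient_of c = (n, k)" by (cases "quotient_of c")
  then have k: "k > 0" "c = of_int n / of_int k" using quotient_of_denom_pos quotient_of_div by auto
  show ?case
  proof (intro exI conjI)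
    show "d * k > 0" using dQ k by simp
    show "map_poly of_int (pCons (d * n) (smult k Q)) = smult (of_int (d * k)) (pCons c q)"
      using dQ k by (simp add: map_poly_pCons map_poly_smult field_simps)
  qed
qed

lemma content_monic: "lead_coeff (p :: int poly) = 1 \<Longrightarrow> content p = 1"
proof -
  assume "lead_coeff p = 1"
  then have "content p dvd 1" using content_dvd_coeff[of p "degree p"] by simp
  then show ?thesis using normalize_content[of p] by (metis is_unit_normalize normalize_1)
qed

lemma gauss_quad:
  fixes x :: real and a b :: rat and p :: "int poly"
  assumes lp: "lead_coeff p = 1" and px: "poly (map_poly of_int p) x = 0"
    and rel: "x^2 = of_rat a * x + of_rat b" and xq: "x \<notin> \<rat>"
  shows "a \<in> \<int> \<and> b \<in> \<int>"
proof -
  define m :: "rat poly" where "m = [:-b, -a, 1:]"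
  define P :: "rat poly" where "P = map_poly of_int p"
  have m0: "m \<noteq> 0" by (simp add: m_def)
  have dm: "degree m = 2" by (simp add: m_def)
  define q where "q = P div m"
  define r where "r = P mod m"
  have Pqr: "P = q * m + r" by (simp add: q_def r_def)
  have mx: "poly (map_poly of_rat m) x = 0"
    using rel by (simp add: m_def map_poly_pCons of_rat_minus power2_eq_square algebra_simps)
  have Px: "poly (map_poly of_rat P) x = 0"
  proof -
    have "map_poly (of_rat :: rat \<Rightarrow> real) P = map_poly of_int p"
      by (simp add: P_def map_poly_map_poly o_def)
    then show ?thesis using px by simp
  qed
  have rx: "poly (map_poly of_rat r) x = 0"
    using Px mx unfolding Pqr by (simp add: map_rat_add map_rat_mult)
  have r0: "r = 0"
  proof (rule ccontr)
    assume "r \<noteq> 0"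
    then have "degree r < 2" using degree_mod_less'[OF m0] dm by (simp add: r_def)
    then have req: "r = [:coeff r 0, coeff r 1:]"
      by (intro poly_eqI) (auto simp: coeff_pCons split: nat.splits intro!: coeff_eq_0)
    have "of_rat (coeff r 0) + of_rat (coeff r 1) * x = 0"
      using rx by (subst (asm) req) (simp add: map_poly_pCons mult.commute)
    moreover have "coeff r 1 \<noteq> 0 \<or> coeff r 0 \<noteq> 0" using \<open>r \<noteq> 0\<close> req by (metis pCons_0_0)
    ultimately show False
    proof (cases "coeff r 1 = 0")
      case False
      assume "of_rat (coeff r 0) + of_rat (coeff r 1) * x = 0"
      then have "x = - of_rat (coeff r 0) / of_rat (coeff r 1)" using False by (simp add: field_simps)
      then show False using xq by (simp add: Rats_divide)
    qed auto
  qed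
  have Pq: "P = q * m" using Pqr r0 by simp
  have lP: "lead_coeff P = 1"
    using lp by (simp add: P_def degree_map_poly coeff_map_poly)
  have lq: "lead_coeff q = 1" using lP unfolding Pq lead_coeff_mult by (simp add: m_def)
  obtain d1 M where d1: "d1 > 0" "map_poly of_int M = smult (of_int d1) m" using clear_denoms by blast
  obtain d2 Qp where d2: "d2 > 0" "map_poly of_int Qp = smult (of_int d2) q" using clear_denoms by blast
  have "map_poly of_int (M * Qp) = map_poly (of_int :: int \<Rightarrow> rat) (smult (d1 * d2) p)"
  proof -
    have Pq': "map_poly of_int p = m * q" using Pq by (simp add: P_def mult.commute)
    show ?thesis by (simp add: map_int_mult d1 d2 map_poly_smult Pq' mult_ac)
  qed
  then have MQ: "M * Qp = smult (d1 * d2) p" by (rule map_int_inj)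
  have cont: "content M * content Qp = d1 * d2"
    using arg_cong[OF MQ, of content] d1 d2 by (simp add: content_mult content_monic[OF lp])
  have coefM: "of_int (coeff M i) = of_int d1 * coeff m i" for i
    using arg_cong[OF d1(2), of "\<lambda>p. coeff p i"] by (simp add: coeff_map_poly)
  have coefQ: "of_int (coeff Qp i) = of_int d2 * coeff q i" for i
    using arg_cong[OF d2(2), of "\<lambda>p. coeff p i"] by (simp add: coeff_map_poly)
  have "coeff M 2 = d1" using coefM[of 2] by (simp add: m_def numeral_2_eq_2)
  then have g1: "content M dvd d1" by (metis content_dvd_coeff)
  have "coeff Qp (degree q) = d2" using coefQ[of "degree q"] lq by simp
  then have g2: "content Qp dvd d2" by (metis content_dvd_coeff)
  have n1: "content M \<ge> 0" "content Qp \<ge> 0"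
    by (metis abs_ge_zero normalize_content normalize_int_def)+
  have "content M \<noteq> 0" "content Qp \<noteq> 0" using cont d1 d2 by auto
  then have le1: "content M \<le> d1" and le2: "content Qp \<le> d2"
    using g1 g2 d1 d2 by (auto intro: zdvd_imp_le)
  have "content M = d1"
  proof (rule ccontr)
    assume "content M \<noteq> d1"
    then have "content M < d1" using le1 by simp
    then have "content M * content Qp < d1 * d2"
    proof -
      have "content M * content Qp \<le> content M * d2" using le2 n1(1) by (rule mult_left_mono)
      also have "\<dots> < d1 * d2" using \<open>content M < d1\<close> d2(1) by (rule mult_strict_right_mono)
      finally show ?thesis .
    qed
    then show False using cont by simp
  qed
  then have dv: "d1 dvd coeff M i" for i by (metis content_dvd_coeff)
  have isint: "coeff m i \<in> \<int>" for i
  proof -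
    obtain k where "coeff M i = d1 * k" using dv[of i] by (auto elim: dvdE)
    then have "of_int d1 * coeff m i = of_int d1 * (of_int k :: rat)" using coefM[of i] by (metis of_int_mult)
    then have "coeff m i = of_int k" using d1 by (metis mult_cancel_left of_int_eq_0_iff less_irrefl)
    then show ?thesis by simp
  qed
  from isint[of 0] isint[of 1] show ?thesis
    by (simp add: m_def)
qed

lemma quad_rel:
  assumes sfK: "real_subfield K" and dK: "field_degree K = 2" and uK: "u \<in> K" and uq: "u \<notin> \<rat>"
  shows "\<exists>a b :: rat. u^2 = of_rat a * u + of_rat b"
proof -
  define S where "S = {1, u, u^2}"
  have u1: "u \<noteq> 1" "u \<noteq> 0" using uq by auto
  have u2: "u^2 \<noteq> 1"
  proof
    assume "u^2 = 1" then have "u = 1 \<or> u = -1" by (simp add: power2_eq_1_iff)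
    then show False using uq by auto
  qed
  have u3: "u^2 \<noteq> u" using u1 by (simp add: power2_eq_square)
  have cS: "card S = 3" using u1 u2 u3 by (simp add: S_def)
  have fS: "finite S" by (simp add: S_def)
  have SK: "S \<subseteq> K" using uK sf_1[OF sfK] sf_power[OF sfK uK] by (auto simp: S_def)
  have dep: "Q.dependent S"
  proof (rule ccontr)
    assume ind: "Q.independent S"
    have "Q.dim K \<noteq> 0" using dK by (simp add: field_degree_def)
    then have ex: "\<exists>b. Q.independent b \<and> Q.span b = Q.span K"
      unfolding Q.dim_def by (cases "\<exists>b. Q.independent b \<and> Q.span b = Q.span K") simp_all
    define bb where "bb = (SOME b. Q.independent b \<and> Q.span b = Q.span K)"
    have bb0: "Q.independent bb \<and> Q.span bb = Q.span K" unfolding bb_def by (rule someI_ex[OF ex])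
    then have bb: "Q.independent bb" "Q.span bb = Q.span K" by auto
    have "Q.dim K = card bb" using Q.dim_eq_card[of bb K] bb by simp
    then have cb: "card bb = 2" using dK by (simp add: field_degree_def)
    then have "finite bb" by (metis card.infinite zero_neq_numeral)
    moreover have "S \<subseteq> Q.span bb" using SK bb(2) Q.span_superset by blast
    ultimately have "card S \<le> card bb" using Q.independent_span_bound ind by blast
    then show False using cS cb by simp
  qed
  then obtain c where c: "\<exists>v\<in>S. c v \<noteq> 0" "(\<Sum>v\<in>S. rat_scale (c v) v) = 0"
    using Q.dependent_finite[OF fS] by blast
  have eq: "of_rat (c 1) + of_rat (c u) * u + of_rat (c (u^2)) * u^2 = 0"
    using c(2) u1 u2 u3 by (simp add: S_def rat_scale_def add.assoc)
  show ?thesis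
  proof (cases "c (u^2) = 0")
    case True
    then have e2: "of_rat (c 1) + of_rat (c u) * u = 0" using eq by simp
    have "c u = 0"
    proof (rule ccontr)
      assume "c u \<noteq> 0"
      then have "u = - of_rat (c 1) / of_rat (c u)" using e2 by (simp add: field_simps)
      then show False using uq by (metis Rats_divide Rats_minus_iff Rats_of_rat)
    qed
    then have "c 1 = 0" using e2 by simp
    then show ?thesis using c(1) True \<open>c u = 0\<close> by (auto simp: S_def)
  next
    case False
    show ?thesis
    proof (intro exI)
      show "u^2 = of_rat (- c u / c (u^2)) * u + of_rat (- c 1 / c (u^2))"
        using eq False by (simp add: of_rat_divide of_rat_minus field_simps)
    qed
  qed
qed

lemma fund_unit_struct:
  assumes qK: "quadratic_subfield L K" and fu: "fundamental_unit K u"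
  shows "u \<in> K" "u > 1" "u \<notin> \<rat>"
    "\<exists>A B :: int. (B = 1 \<or> B = -1) \<and> u^2 = of_int A * u + of_int B"
proof -
  have sfK: "real_subfield K" and dK: "field_degree K = 2" using qK by (auto simp: quadratic_subfield_def)
  have uU: "u \<in> units_of_ring_of_integers K" and u1: "u > 1" using fu by (auto simp: fundamental_unit_def)
  then have uK: "u \<in> K" and ai: "algebraic_int u" "algebraic_int (inverse u)"
    by (auto simp: units_of_ring_of_integers_def)
  show "u \<in> K" "u > 1" by fact+
  show uq: "u \<notin> \<rat>"
  proof
    assume "u \<in> \<rat>"
    then have "inverse u \<in> \<rat>" by simp
    then have "inverse u \<in> \<int>" using ai(2) rational_algebraic_int_is_int by blast
    then obtain k where k: "inverse u = of_int k" by (auto elim: Ints_cases)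
    have "0 < inverse u" "inverse u < 1" using u1 by (auto simp: inverse_less_1_iff)
    then have "0 < k" "k < 1" unfolding k by simp_all
    then show False by linarith
  qed
  obtain a b where ab: "u^2 = of_rat a * u + of_rat b" using quad_rel[OF sfK dK uK uq] by blast
  obtain p where p: "poly (map_poly of_int p) u = 0" "lead_coeff p = 1"
    using algebraic_int_altdef_ipoly[THEN iffD1, OF ai(1)] by blast
  have abZ: "a \<in> \<int>" "b \<in> \<int>" using gauss_quad[OF p(2) p(1) ab uq] by auto
  have b0: "b \<noteq> 0"
  proof
    assume "b = 0"
    then have "u = of_rat a" using ab u1 by (simp add: power2_eq_square)
    then show False using uq by simp
  qed
  define v where "v = inverse u"
  have vq: "v \<notin> \<rat>" using uq by (metis v_def Rats_inverse inverse_inverse_eq)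
  have vrel: "v^2 = of_rat (- a / b) * v + of_rat (1 / b)"
  proof -
    have "u \<noteq> 0" using u1 by simp
    then have uv: "u * v = 1" by (simp add: v_def)
    have "u^2 * v^2 = 1" using uv by (metis power_mult_distrib power_one)
    then have "(of_rat a * u + of_rat b) * v^2 = 1" using ab by simp
    then have "of_rat a * (u * v) * v + of_rat b * v^2 = 1" by (simp add: algebra_simps power2_eq_square)
    then have e: "of_rat a * v + of_rat b * v^2 = 1" using uv by simp
    have bb: "(of_rat b :: real) \<noteq> 0" using b0 by simp
    have "v^2 = (1 - of_rat a * v) / of_rat b" using e bb by (simp add: field_simps)
    also have "\<dots> = of_rat (- a / b) * v + of_rat (1 / b)"
      using bb by (simp add: of_rat_divide of_rat_minus field_simps)
    finally show ?thesis .
  qed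
  obtain p' where p': "poly (map_poly of_int p') v = 0" "lead_coeff p' = 1"
    using algebraic_int_altdef_ipoly[THEN iffD1, OF ai(2)] unfolding v_def by blast
  have "1 / b \<in> \<int>" using gauss_quad[OF p'(2) p'(1) vrel vq] by auto
  then obtain C where C: "1 / b = of_int C" by (auto elim: Ints_cases)
  obtain Bi where Bi: "b = of_int Bi" using abZ(2) by (auto elim: Ints_cases)
  obtain A where A: "a = of_int A" using abZ(1) by (auto elim: Ints_cases)
  have "of_int (Bi * C) = (1::rat)" using C Bi b0 by (simp add: field_simps)
  then have "Bi * C = 1" by (metis of_int_eq_1_iff)
  then have "Bi = 1 \<or> Bi = -1" using zmult_eq_1_iff by blast
  moreover have "u^2 = of_int A * u + of_int Bi" using ab A Bi by simp
  ultimately show "\<exists>A B :: int. (B = 1 \<or> B = -1) \<and> u^2 = of_int A * u + of_int B" by blast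
qed

definition "phi = (1 + sqrt 5) / 2"

lemma unit_bounds:
  fixes u :: real and A B :: int
  assumes u1: "u > 1" and rel: "u^2 = of_int A * u + of_int B" and B: "B = 1 \<or> B = -1"
  shows "u \<ge> phi" "u = phi \<or> u \<ge> 1 + sqrt 2"
proof -
  have s2: "sqrt 2 < 3/2" by (rule real_less_lsqrt) (auto simp: power2_eq_square)
  have s5: "sqrt 5 < 3" by (rule real_less_lsqrt) auto
  have ph: "phi < 2" using s5 by (simp add: phi_def)
  have "u = phi \<or> u \<ge> 1 + sqrt 2"
  proof (cases "B = 1")
    case True
    then have r: "u^2 = of_int A * u + 1" using rel by simp
    have "u^2 > 1" using u1 by (simp add: one_less_power)
    then have "of_int A * u > 0" using r by linarith
    then have "A > 0" using u1 by (simp add: zero_less_mult_iff)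
    then consider "A = 1" | "A \<ge> 2" by linarith
    then show ?thesis
    proof cases
      case 1
      then have "(2*u - 1)^2 = 5" using r by (simp add: power2_eq_square algebra_simps)
      then have "sqrt 5 = 2*u - 1" using u1 by (intro real_sqrt_unique) auto
      then show ?thesis by (simp add: phi_def)
    next
      case 2
      then have "of_int A * u \<ge> 2 * u" using u1 by (intro mult_right_mono) auto
      then have "(u - 1)^2 \<ge> 2" using r by (simp add: power2_eq_square algebra_simps)
      then have "sqrt 2 \<le> sqrt ((u-1)^2)" by (rule real_sqrt_le_mono)
      then show ?thesis using u1 by simp
    qed
  next
    case False
    then have r: "u^2 = of_int A * u - 1" using rel B by simp
    have "u^2 > 1" using u1 by (simp add: one_less_power)
    then have "of_int A * u > 0" using r by linarith
    then have "A > 0" using u1 by (simp add: zero_less_mult_iff)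
    have "A \<ge> 3"
    proof (rule ccontr)
      assume "\<not> A \<ge> 3"
      then have "of_int A * u \<le> 2 * u" using \<open>A > 0\<close> u1 by (intro mult_right_mono) auto
      then have "(u - 1)^2 \<le> 0" using r by (simp add: power2_eq_square algebra_simps)
      moreover have "(u - 1)^2 > 0" using u1 by simp
      ultimately show False by linarith
    qed
    then have "of_int A * u \<ge> 3 * u" using u1 by (intro mult_right_mono) auto
    then have q: "u^2 - 3*u + 1 \<ge> 0" using r by simp
    have "u \<ge> 5/2"
    proof (rule ccontr)
      assume "\<not> u \<ge> 5/2"
      then have "(u - 1) * (u - 5/2) < 0" using u1 by (simp add: mult_pos_neg)
      moreover have "(u - 1) * (u - 5/2) = u*u - 7/2*u + 5/2" by (simp add: field_simps)
      moreover have "u*u \<ge> 3*u - 1" using q by (simp add: power2_eq_square)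
      ultimately show False using \<open>\<not> u \<ge> 5/2\<close> by linarith
    qed
    then show ?thesis using s2 by simp
  qed
  moreover have "phi \<le> 1 + sqrt 2" using ph real_sqrt_ge_one[of 2] by linarith
  ultimately show "u = phi \<or> u \<ge> 1 + sqrt 2" "u \<ge> phi" by auto
qed

lemma lin_in: "real_subfield K \<Longrightarrow> u \<in> K \<Longrightarrow> c0 \<in> \<rat> \<Longrightarrow> c1 \<in> \<rat> \<Longrightarrow> c0 + c1 * u \<in> K"
  by (rule sf_add, assumption, rule sf_Rats, assumption+, rule sf_mult, assumption, rule sf_Rats, assumption+)

lemma same_unit:
  assumes fu: "fundamental_unit K u" and fu': "fundamental_unit K' u'"
    and "u' \<in> K" "u \<in> K'"
  shows "u = u'"
proof -
  have u1: "u > 1" "u' > 1" using fu fu' by (auto simp: fundamental_unit_def)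
  have uu: "u \<in> units_of_ring_of_integers K" "u' \<in> units_of_ring_of_integers K'"
    using fu fu' by (auto simp: fundamental_unit_def)
  have "u' \<in> units_of_ring_of_integers K" using uu(2) assms(3) by (auto simp: units_of_ring_of_integers_def)
  then obtain k where k: "u' = u powi k \<or> u' = - (u powi k)" using fu by (auto simp: fundamental_unit_def)
  have "u powi k > 0" using u1 by simp
  then have k': "u' = u powi k"
  proof (cases "u' = u powi k")
    case False
    then have "u' = - (u powi k)" using k by blast
    then have "u' < 0" using \<open>u powi k > 0\<close> by simp
    then show ?thesis using u1 by simp
  qed
  have "u \<in> units_of_ring_of_integers K'" using uu(1) assms(4) by (auto simp: units_of_ring_of_integers_def)
  then obtain j where j: "u = u' powi j \<or> u = - (u' powi j)" using fu' by (auto simp: fundamental_unit_def)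
  have "u' powi j > 0" using u1 by simp
  then have j': "u = u' powi j"
  proof (cases "u = u' powi j")
    case False
    then have "u = - (u' powi j)" using j by blast
    then have "u < 0" using \<open>u' powi j > 0\<close> by simp
    then show ?thesis using u1 by simp
  qed
  have jk: "u = (u powi k) powi j" using j' unfolding k' .
  have "u powi (k * j) = (u powi k) powi j" by (rule power_int_mult)
  also have "\<dots> = u" using jk by (rule sym)
  also have "u = u powi 1" by simp
  finally have eq: "u powi (k * j) = u powi 1" .
  have kj: "k * j = 1"
  proof (rule ccontr)
    assume "k * j \<noteq> 1"
    then consider "k * j < 1" | "1 < k * j" by linarith
    then show False
    proof cases
      case 1
      have "u powi (k*j) < u powi 1" by (rule power_int_strict_increasing[OF 1 u1(1)])
      then show False using eq by simp
    next
      case 2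
      have "u powi 1 < u powi (k*j)" by (rule power_int_strict_increasing[OF 2 u1(1)])
      then show False using eq by simp
    qed
  qed
  then have "k = 1 \<or> k = -1" using zmult_eq_1_iff by blast
  moreover have "k \<noteq> -1"
  proof
    assume "k = -1"
    then have "u' = inverse u" using k' by (simp add: power_int_minus)
    moreover have "inverse u < 1" using u1 by (simp add: inverse_less_1_iff)
    ultimately show False using u1 by linarith
  qed
  ultimately have "k = 1" by blast
  then show ?thesis using k' by simp
qed

locale mth = nf L B for L B +
  assumes tr: "totally_real L" and gal: "card (automorphisms L) = card B"
begin

definition "U = {u. \<exists>K. quadratic_subfield L K \<and> fundamental_unit K u}"
definition "P = arch_places L"
definition "hv v = (\<lambda>x. Re ((SOME \<sigma>. \<sigma> \<in> v) x))"
definition "sg u v = (if v \<in> P then (if hv v u = u then 1 else -1) else (0::real))"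
definition "emb (\<rho> :: real \<Rightarrow> real) = {\<lambda>x. complex_of_real (\<rho> x)}"

lemma emb_rhom:
  assumes s: "\<sigma> \<in> embeddings L"
  shows "\<sigma> = (\<lambda>x. complex_of_real (Re (\<sigma> x)))" "rhom L (\<lambda>x. Re (\<sigma> x))"
proof -
  have "\<sigma> x = complex_of_real (Re (\<sigma> x))" for x
  proof (cases "x \<in> L")
    case True then have "\<sigma> x \<in> \<real>" using tr s by (auto simp: totally_real_def)
    then show ?thesis by simp
  next
    case False then show ?thesis using s by (simp add: embeddings_def)
  qed
  then show e: "\<sigma> = (\<lambda>x. complex_of_real (Re (\<sigma> x)))" by (rule ext)
  have h: "\<sigma> 1 = 1" "\<And>x y. x \<in> L \<Longrightarrow> y \<in> L \<Longrightarrow> \<sigma> (x + y) = \<sigma> x + \<sigma> y \<and> \<sigma> (x * y) = \<sigma> x * \<sigma> y"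
    "\<And>x. x \<notin> L \<Longrightarrow> \<sigma> x = 0" using s by (auto simp: embeddings_def)
  show "rhom L (\<lambda>x. Re (\<sigma> x))" unfolding rhom_def
  proof (intro conjI ballI allI impI)
    show "Re (\<sigma> 1) = 1" using h(1) by simp
  next
    fix x y assume xy: "x \<in> L" "y \<in> L"
    show "Re (\<sigma> (x + y)) = Re (\<sigma> x) + Re (\<sigma> y)" using h(2)[OF xy] by simp
    have rx: "\<sigma> x \<in> \<real>" "\<sigma> y \<in> \<real>" using tr s xy by (auto simp: totally_real_def)
    have "Re (\<sigma> x * \<sigma> y) = Re (\<sigma> x) * Re (\<sigma> y)" using rx by (auto elim!: Reals_cases)
    then show "Re (\<sigma> (x * y)) = Re (\<sigma> x) * Re (\<sigma> y)" using h(2)[OF xy] by simp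
  next
    fix x assume "x \<notin> L" then show "Re (\<sigma> x) = 0" using h(3) by simp
  qed
qed

lemma H_emb: "rhom L \<rho> \<Longrightarrow> (\<lambda>x. complex_of_real (\<rho> x)) \<in> embeddings L"
  by (auto simp: rhom_def embeddings_def)

lemma P_eq: "P = emb ` H"
proof
  show "P \<subseteq> emb ` H"
  proof
    fix v assume "v \<in> P"
    then obtain \<sigma> where s: "\<sigma> \<in> embeddings L" "v = {\<sigma>, cnj \<circ> \<sigma>}" by (auto simp: P_def arch_places_def)
    define \<rho> where "\<rho> = (\<lambda>x. Re (\<sigma> x))"
    have e: "\<sigma> = (\<lambda>x. complex_of_real (\<rho> x))" using emb_rhom(1)[OF s(1)] by (simp add: \<rho>_def)
    have "cnj \<circ> \<sigma> = \<sigma>" unfolding e by (rule ext) simp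
    then have "v = emb \<rho>" using s(2) e by (simp add: emb_def)
    moreover have "\<rho> \<in> H" using emb_rhom(2)[OF s(1)] by (simp add: \<rho>_def H_def)
    ultimately show "v \<in> emb ` H" by blast
  qed
next
  show "emb ` H \<subseteq> P"
  proof
    fix v assume "v \<in> emb ` H"
    then obtain \<rho> where r: "\<rho> \<in> H" "v = emb \<rho>" by blast
    have "cnj \<circ> (\<lambda>x. complex_of_real (\<rho> x)) = (\<lambda>x. complex_of_real (\<rho> x))" by (rule ext) simp
    then have "v = {(\<lambda>x. complex_of_real (\<rho> x)), cnj \<circ> (\<lambda>x. complex_of_real (\<rho> x))}"
      using r by (simp add: emb_def)
    moreover have "(\<lambda>x. complex_of_real (\<rho> x)) \<in> embeddings L" using H_emb r by (simp add: H_def)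
    ultimately show "v \<in> P" by (auto simp: P_def arch_places_def)
  qed
qed

lemma hv_emb: "hv (emb \<rho>) = \<rho>"
  by (simp add: hv_def emb_def)

lemma inj_emb: "inj emb"
proof (rule injI)
  fix a b assume "emb a = emb b"
  then have "(\<lambda>x. complex_of_real (a x)) = (\<lambda>x. complex_of_real (b x))" by (simp add: emb_def)
  then show "a = b"
  proof (intro ext)
    fix x assume e: "(\<lambda>x. complex_of_real (a x)) = (\<lambda>x. complex_of_real (b x))"
    from fun_cong[OF e, of x] show "a x = b x" by simp
  qed
qed

lemma sumP: "(\<Sum>v\<in>P. f v) = (\<Sum>\<rho>\<in>H. f (emb \<rho>))"
  unfolding P_eq using sum.reindex[OF inj_on_subset[OF inj_emb subset_UNIV], of f H] by (simp add: o_def)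

lemma finP: "finite P" and cardP: "card P = card H"
  using H_finite inj_emb by (auto simp: P_eq card_image inj_on_subset)

lemma LOG_P: "\<rho> \<in> H \<Longrightarrow> LOG L \<gamma> (emb \<rho>) = ln \<bar>\<rho> \<gamma>\<bar>"
proof -
  assume r: "\<rho> \<in> H"
  have "emb \<rho> \<in> arch_places L" using P_eq r P_def by auto
  then show ?thesis by (simp add: LOG_def place_e_def emb_def)
qed

lemma LOG_out: "v \<notin> P \<Longrightarrow> LOG L \<gamma> v = 0"
  by (simp add: LOG_def P_def)

lemma Aut_H: "automorphisms L \<subseteq> H"
  by (auto simp: automorphisms_def H_def rhom_def)

lemma card_Aut_le: "card (automorphisms L) \<le> card P"
  using card_mono[OF H_finite Aut_H] cardP by simp

lemma U_props:
  assumes "u \<in> U"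
  shows "u \<in> L" "u > 1" "u \<notin> \<rat>" "\<exists>A Bn :: int. (Bn = 1 \<or> Bn = -1) \<and> u^2 = of_int A * u + of_int Bn"
proof -
  obtain K where K: "quadratic_subfield L K" "fundamental_unit K u" using assms by (auto simp: U_def)
  show "u \<in> L" using fund_unit_struct(1)[OF K] K(1) by (auto simp: quadratic_subfield_def)
  show "u > 1" "u \<notin> \<rat>" "\<exists>A Bn :: int. (Bn = 1 \<or> Bn = -1) \<and> u^2 = of_int A * u + of_int Bn"
    using fund_unit_struct[OF K] by auto
qed

lemma rho_unit:
  assumes uL: "u \<in> L" and r: "\<rho> \<in> H" and rel: "u^2 = of_int A * u + of_int Bn"
  shows "\<rho> u = u \<or> \<rho> u = of_int A - u"
proof -
  have rh: "rhom L \<rho>" using r by (simp add: H_def)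
  have "\<rho> (u^2) = \<rho> (of_int A * u + of_int Bn)" using rel by simp
  also have "\<dots> = of_int A * \<rho> u + of_int Bn"
    using rh_add[OF sf rh sf_mult[OF sf sf_of_int[OF sf] uL] sf_of_int[OF sf]] rh_mult[OF sf rh sf_of_int[OF sf] uL]
      rh_of_int[OF sf rh] by simp
  finally have e: "(\<rho> u)^2 = of_int A * \<rho> u + of_int Bn" using rh_power[OF sf rh uL] by simp
  have "(\<rho> u - u) * (\<rho> u - (of_int A - u)) = (\<rho> u)^2 - of_int A * \<rho> u - (u^2 - of_int A * u)"
    by (simp add: algebra_simps power2_eq_square)
  also have "\<dots> = 0" using e rel by simp
  finally show ?thesis by simp
qed

lemma abs_conj:
  fixes u :: real
  assumes u1: "u > 1" and rel: "u^2 = of_int A * u + of_int Bn" and Bn: "Bn = 1 \<or> Bn = -1"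
  shows "\<bar>of_int A - u\<bar> = 1 / u"
proof -
  have "u * (of_int A - u) = of_int A * u - u^2" by (simp add: algebra_simps power2_eq_square)
  also have "\<dots> = - of_int Bn" using rel by simp
  finally have "u * (of_int A - u) = - of_int Bn" .
  then have "\<bar>u\<bar> * \<bar>of_int A - u\<bar> = 1" using Bn by (auto simp: abs_mult[symmetric])
  then show ?thesis using u1 by (simp add: field_simps)
qed

lemma LOG_unit: "u \<in> U \<Longrightarrow> LOG L u = (\<lambda>v. ln u * sg u v)"
proof (rule ext)
  fix v assume uU: "u \<in> U"
  obtain A Bn where AB: "Bn = 1 \<or> Bn = -1" "u^2 = of_int A * u + of_int Bn" using U_props(4)[OF uU] by blast
  have u1: "u > 1" and uL: "u \<in> L" using U_props[OF uU] by auto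
  show "LOG L u v = ln u * sg u v"
  proof (cases "v \<in> P")
    case False then show ?thesis by (simp add: LOG_out sg_def)
  next
    case True
    then obtain \<rho> where r: "\<rho> \<in> H" "v = emb \<rho>" using P_eq by auto
    have L: "LOG L u v = ln \<bar>\<rho> u\<bar>" using LOG_P[OF r(1)] r(2) by simp
    consider "\<rho> u = u" | "\<rho> u \<noteq> u" "\<rho> u = of_int A - u" using rho_unit[OF uL r(1) AB(2)] by blast
    then show ?thesis
    proof cases
      case 1 then show ?thesis using L True u1 r by (simp add: sg_def hv_emb)
    next
      case 2
      have "ln \<bar>\<rho> u\<bar> = ln (1/u)" using 2 abs_conj[OF u1 AB(2) AB(1)] by simp
      also have "\<dots> = - ln u" using u1 by (simp add: ln_div)
      finally show ?thesis using L True 2 r by (simp add: sg_def hv_emb)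
    qed
  qed
qed

end

lemma in_field:
  assumes sfK: "real_subfield K" and uK: "u \<in> K" and uq: "u \<notin> \<rat>"
    and Y: "(u + u - of_int A) * (u' + u' - of_int A') \<in> \<rat>"
  shows "u' \<in> K"
proof -
  define y where "y = u + u - of_int A"
  define y' where "y' = u' + u' - of_int A'"
  have y0: "y \<noteq> 0"
  proof
    assume "y = 0"
    then have "u = of_int A / 2" by (simp add: y_def)
    then have "u \<in> \<rat>" by (rule ssubst) simp
    then show False using uq by simp
  qed
  have yK: "y \<in> K" unfolding y_def using uK by (intro sf_diff[OF sfK] sf_add[OF sfK] sf_of_int[OF sfK]) auto
  have eq: "y' = (y * y') * inverse y" using y0 by simp
  have yy: "y * y' \<in> K" using Y sf_Rats[OF sfK] by (simp add: y_def y'_def)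
  have y'K: "y' \<in> K" by (subst eq) (rule sf_mult[OF sfK yy sf_inverse[OF sfK yK]])
  have "u' = (y' + of_int A') / 2" by (simp add: y'_def)
  also have "\<dots> \<in> K" using y'K by (intro sf_divide[OF sfK] sf_add[OF sfK] sf_of_int[OF sfK]) (auto simp: sf_of_int[OF sfK, of 2, simplified])
  finally show ?thesis .
qed

context mth begin

lemma rhom_comp:
  assumes r: "rhom L \<rho>" and t: "\<tau> \<in> automorphisms L"
  shows "rhom L (\<lambda>x. \<rho> (\<tau> x))"
proof -
  have rt: "rhom L \<tau>" using t Aut_H by (auto simp: H_def)
  have bt: "bij_betw \<tau> L L" using t by (simp add: automorphisms_def)
  then have tL: "x \<in> L \<Longrightarrow> \<tau> x \<in> L" for x by (auto simp: bij_betw_def)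
  show ?thesis unfolding rhom_def
  proof (intro conjI ballI allI impI)
    show "\<rho> (\<tau> 1) = 1" using rh_1[OF sf rt] rh_1[OF sf r] by simp
  next
    fix x y assume xy: "x \<in> L" "y \<in> L"
    show "\<rho> (\<tau> (x + y)) = \<rho> (\<tau> x) + \<rho> (\<tau> y)"
      using rh_add[OF sf rt xy] rh_add[OF sf r tL[OF xy(1)] tL[OF xy(2)]] by simp
    show "\<rho> (\<tau> (x * y)) = \<rho> (\<tau> x) * \<rho> (\<tau> y)"
      using rh_mult[OF sf rt xy] rh_mult[OF sf r tL[OF xy(1)] tL[OF xy(2)]] by simp
  next
    fix x assume "x \<notin> L"
    then show "\<rho> (\<tau> x) = 0" using rh_out[OF sf rt] rh_0[OF sf r] by simp
  qed
qed

lemma sum_H_zero: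
  assumes Y: "Y \<in> L" "Y \<notin> \<rat>" "Y^2 \<in> \<rat>"
  shows "(\<Sum>\<rho>\<in>H. \<rho> Y) = 0"
proof -
  have "card B \<le> card (automorphisms L)" using gal by simp
  then obtain \<tau> where t: "\<tau> \<in> automorphisms L" "\<tau> Y \<noteq> Y" using artin[OF Aut_H _ Y(1,2)] by blast
  have rt: "rhom L \<tau>" using t Aut_H by (auto simp: H_def)
  have bt: "bij_betw \<tau> L L" using t by (simp add: automorphisms_def)
  have "(\<tau> Y)^2 = \<tau> (Y^2)" using rh_power[OF sf rt Y(1)] by simp
  also have "\<dots> = Y^2" using rh_Rats[OF sf rt Y(3)] .
  finally have "(\<tau> Y - Y) * (\<tau> Y + Y) = 0" by (simp add: algebra_simps power2_eq_square)
  then have tY: "\<tau> Y = - Y" using t(2) by (simp add: add_eq_0_iff)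
  define f where "f \<rho> = (\<lambda>x. \<rho> (\<tau> x))" for \<rho> :: "real \<Rightarrow> real"
  have fH: "f ` H \<subseteq> H" using rhom_comp[OF _ t(1)] by (auto simp: f_def H_def)
  have inj: "inj_on f H"
  proof (rule inj_onI)
    fix a b assume ab: "a \<in> H" "b \<in> H" "f a = f b"
    have ra: "rhom L a" and rb: "rhom L b" using ab by (auto simp: H_def)
    show "a = b"
    proof (rule rhom_eqI[OF ra rb])
      fix z assume "z \<in> L"
      then obtain x where "x \<in> L" "z = \<tau> x" using bt by (auto simp: bij_betw_def)
      then show "a z = b z" using fun_cong[OF ab(3), of x] by (simp add: f_def)
    qed
  qed
  have fHH: "f ` H = H" using endo_inj_surj[OF H_finite fH inj] .
  have "(\<Sum>\<rho>\<in>H. \<rho> Y) = (\<Sum>\<rho>\<in>f ` H. \<rho> Y)" using fHH by simp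
  also have "\<dots> = (\<Sum>\<rho>\<in>H. f \<rho> Y)" using sum.reindex[OF inj, of "\<lambda>\<rho>. \<rho> Y"] by simp
  also have "\<dots> = (\<Sum>\<rho>\<in>H. - \<rho> Y)"
  proof (rule sum.cong)
    fix \<rho> assume "\<rho> \<in> H"
    then have r: "rhom L \<rho>" by (simp add: H_def)
    show "f \<rho> Y = - \<rho> Y" using rh_minus[OF sf r Y(1)] tY by (simp add: f_def)
  qed simp
  also have "\<dots> = - (\<Sum>\<rho>\<in>H. \<rho> Y)" by (simp add: sum_negf)
  finally show ?thesis by simp
qed

lemma sg_emb: "\<rho> \<in> H \<Longrightarrow> sg u (emb \<rho>) = (if \<rho> u = u then 1 else -1)"
  using P_eq by (simp add: sg_def hv_emb)

lemma orth:
  assumes uU: "u \<in> U" and uU': "u' \<in> U" and ne: "u \<noteq> u'"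
  shows "(\<Sum>v\<in>P. sg u v * sg u' v) = 0"
proof -
  obtain A Bn where AB: "Bn = 1 \<or> Bn = -1" "u^2 = of_int A * u + of_int Bn" using U_props(4)[OF uU] by blast
  obtain A' Bn' where AB': "Bn' = 1 \<or> Bn' = -1" "u'^2 = of_int A' * u' + of_int Bn'" using U_props(4)[OF uU'] by blast
  have uL: "u \<in> L" "u' \<in> L" and uq: "u \<notin> \<rat>" "u' \<notin> \<rat>" using U_props uU uU' by auto
  define y where "y = u + u - of_int A"
  define y' where "y' = u' + u' - of_int A'"
  define Y where "Y = y * y'"
  have yL: "y \<in> L" "y' \<in> L" unfolding y_def y'_def
    by (rule sf_diff[OF sf sf_add[OF sf uL(1) uL(1)] sf_of_int[OF sf]],
        rule sf_diff[OF sf sf_add[OF sf uL(2) uL(2)] sf_of_int[OF sf]])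
  have YL: "Y \<in> L" using yL sf_mult[OF sf] by (simp add: Y_def)
  have y2: "y^2 = of_int (A^2 + 4*Bn)" using AB(2) by (simp add: y_def power2_eq_square algebra_simps)
  have y2': "y'^2 = of_int (A'^2 + 4*Bn')" using AB'(2) by (simp add: y'_def power2_eq_square algebra_simps)
  have Y2: "Y^2 \<in> \<rat>" unfolding Y_def power_mult_distrib y2 y2' by simp
  have Yq: "Y \<notin> \<rat>"
  proof
    assume Yr: "Y \<in> \<rat>"
    obtain K where K: "quadratic_subfield L K" "fundamental_unit K u" using uU by (auto simp: U_def)
    obtain K' where K': "quadratic_subfield L K'" "fundamental_unit K' u'" using uU' by (auto simp: U_def)
    have sK: "real_subfield K" "real_subfield K'" using K K' by (auto simp: quadratic_subfield_def)
    have "u' \<in> K" using in_field[OF sK(1) fund_unit_struct(1)[OF K] uq(1)] Yr by (simp add: Y_def y_def y'_def)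
    moreover have "u \<in> K'" using in_field[OF sK(2) fund_unit_struct(1)[OF K'] uq(2), of A' u A] Yr
      by (simp add: Y_def y_def y'_def mult.commute)
    ultimately have "u = u'" using same_unit[OF K(2) K'(2)] by blast
    then show False using ne by simp
  qed
  have y0: "y \<noteq> 0" "y' \<noteq> 0" using Yq by (auto simp: Y_def)
  have ry: "\<rho> y = (if \<rho> u = u then 1 else -1) * y" if r: "\<rho> \<in> H" for \<rho>
  proof -
    have rh: "rhom L \<rho>" using r by (simp add: H_def)
    have "\<rho> y = \<rho> u + \<rho> u - of_int A" unfolding y_def
      using rh_diff[OF sf rh sf_add[OF sf uL(1) uL(1)] sf_of_int[OF sf]] rh_add[OF sf rh uL(1) uL(1)]
        rh_of_int[OF sf rh] by simp
    then show ?thesis using rho_unit[OF uL(1) r AB(2)] by (auto simp: y_def)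
  qed
  have ry': "\<rho> y' = (if \<rho> u' = u' then 1 else -1) * y'" if r: "\<rho> \<in> H" for \<rho>
  proof -
    have rh: "rhom L \<rho>" using r by (simp add: H_def)
    have "\<rho> y' = \<rho> u' + \<rho> u' - of_int A'" unfolding y'_def
      using rh_diff[OF sf rh sf_add[OF sf uL(2) uL(2)] sf_of_int[OF sf]] rh_add[OF sf rh uL(2) uL(2)]
        rh_of_int[OF sf rh] by simp
    then show ?thesis using rho_unit[OF uL(2) r AB'(2)] by (auto simp: y'_def)
  qed
  have "(\<Sum>v\<in>P. sg u v * sg u' v) = (\<Sum>\<rho>\<in>H. sg u (emb \<rho>) * sg u' (emb \<rho>))" by (rule sumP)
  also have "\<dots> = (\<Sum>\<rho>\<in>H. \<rho> Y / Y)"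
  proof (rule sum.cong)
    fix \<rho> assume r: "\<rho> \<in> H"
    then have rh: "rhom L \<rho>" by (simp add: H_def)
    have "\<rho> Y = \<rho> y * \<rho> y'" using rh_mult[OF sf rh yL] by (simp add: Y_def)
    then have "\<rho> Y = (if \<rho> u = u then 1 else -1) * (if \<rho> u' = u' then 1 else -1) * Y"
      using ry[OF r] ry'[OF r] by (simp add: Y_def)
    then show "sg u (emb \<rho>) * sg u' (emb \<rho>) = \<rho> Y / Y"
      using y0 sg_emb[OF r, of u] sg_emb[OF r, of u'] by (simp add: Y_def)
  qed simp
  also have "\<dots> = (\<Sum>\<rho>\<in>H. \<rho> Y) / Y" by (simp add: sum_divide_distrib)
  also have "\<dots> = 0" using sum_H_zero[OF YL Yq Y2] by simp
  finally show ?thesis .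
qed

end

context mth begin

definition ip :: "((real \<Rightarrow> complex) set \<Rightarrow> real) \<Rightarrow> ((real \<Rightarrow> complex) set \<Rightarrow> real) \<Rightarrow> real"
  where "ip a b = (\<Sum>v\<in>P. a v * b v)"
definition IP2 :: "((real \<Rightarrow> complex) set \<Rightarrow> (real \<Rightarrow> complex) set \<Rightarrow> real) \<Rightarrow>
    ((real \<Rightarrow> complex) set \<Rightarrow> (real \<Rightarrow> complex) set \<Rightarrow> real) \<Rightarrow> real"
  where "IP2 w z = (\<Sum>v1\<in>P. \<Sum>v2\<in>P. w v1 v2 * z v1 v2)"

lemma sg_P: "v \<in> P \<Longrightarrow> sg u v * sg u v = 1" by (simp add: sg_def)
lemma sg_abs: "\<bar>sg u v\<bar> \<le> 1" by (simp add: sg_def)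

lemma ip_self: "ip (sg u) (sg u) = real (card P)"
  unfolding ip_def by (simp add: sg_P)

lemma ip_sg: "u \<in> U \<Longrightarrow> u' \<in> U \<Longrightarrow> ip (sg u') (sg u) = (if u' = u then real (card P) else 0)"
  using ip_self orth[of u' u] by (simp add: ip_def)

lemma ip_add: "ip (\<lambda>v. f v + g v) c = ip f c + ip g c"
  unfolding ip_def by (simp add: distrib_right sum.distrib)
lemma ip_neg: "ip (\<lambda>v. - f v) c = - ip f c"
  unfolding ip_def by (simp add: sum_negf)
lemma ip_scale: "ip (\<lambda>v. r * f v) c = r * ip f c"
  unfolding ip_def by (simp add: sum_distrib_left mult.assoc)

lemma LOG_1: "LOG L 1 = (\<lambda>v. 0)"
proof (rule ext)
  fix v show "LOG L 1 v = 0"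
  proof (cases "v \<in> P")
    case True
    then obtain \<rho> where r: "\<rho> \<in> H" "v = emb \<rho>" using P_eq by auto
    have rh: "rhom L \<rho>" using r by (simp add: H_def)
    then show ?thesis using LOG_P[OF r(1)] rh_1[OF sf rh] r by simp
  qed (simp add: LOG_out)
qed

lemma LOG_mult:
  assumes x: "x \<in> L" "x \<noteq> 0" and y: "y \<in> L" "y \<noteq> 0"
  shows "LOG L (x * y) = (\<lambda>v. LOG L x v + LOG L y v)"
proof (rule ext)
  fix v show "LOG L (x * y) v = LOG L x v + LOG L y v"
  proof (cases "v \<in> P")
    case True
    then obtain \<rho> where r: "\<rho> \<in> H" "v = emb \<rho>" using P_eq by auto
    have rh: "rhom L \<rho>" using r by (simp add: H_def)
    have nz: "\<rho> x \<noteq> 0" "\<rho> y \<noteq> 0" using rh_inverse[OF sf rh] x y by auto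
    have "ln \<bar>\<rho> (x * y)\<bar> = ln (\<bar>\<rho> x\<bar> * \<bar>\<rho> y\<bar>)" using rh_mult[OF sf rh x(1) y(1)] by (simp add: abs_mult)
    also have "\<dots> = ln \<bar>\<rho> x\<bar> + ln \<bar>\<rho> y\<bar>" using nz by (simp add: ln_mult)
    finally show ?thesis using LOG_P[OF r(1)] r(2) by simp
  qed (simp add: LOG_out)
qed

lemma LOG_inv:
  assumes x: "x \<in> L" "x \<noteq> 0"
  shows "LOG L (inverse x) = (\<lambda>v. - LOG L x v)"
proof (rule ext)
  fix v show "LOG L (inverse x) v = - LOG L x v"
  proof (cases "v \<in> P")
    case True
    then obtain \<rho> where r: "\<rho> \<in> H" "v = emb \<rho>" using P_eq by auto
    have rh: "rhom L \<rho>" using r by (simp add: H_def)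
    have nz: "\<rho> x \<noteq> 0" and ri: "\<rho> (inverse x) = inverse (\<rho> x)" using rh_inverse[OF sf rh] x by auto
    have "ln \<bar>\<rho> (inverse x)\<bar> = - ln \<bar>\<rho> x\<bar>" using nz ri by (simp add: ln_inverse)
    then show ?thesis using LOG_P[OF r(1)] r(2) by simp
  qed (simp add: LOG_out)
qed

lemma E_props:
  assumes "e \<in> mult_subgroup_gen U"
  shows "e \<in> L \<and> e \<noteq> 0 \<and> (\<forall>u\<in>U. \<exists>k::int. ip (LOG L e) (sg u) = of_int k * (real (card P) * ln u))"
  using assms
proof (induction rule: mult_subgroup_gen.induct)
  case one
  then show ?case using sf_1[OF sf] by (auto simp: LOG_1 ip_def intro!: exI[of _ 0])
next
  case (gen s)
  have s: "s \<in> L" "s > 1" using U_props[OF gen] by auto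
  have "\<exists>k::int. ip (LOG L s) (sg u) = of_int k * (real (card P) * ln u)" if u: "u \<in> U" for u
  proof (cases "s = u")
    case True then show ?thesis using ip_sg[OF u gen] LOG_unit[OF gen] ip_scale[of "ln s" "sg s"]
      by (intro exI[of _ 1]) simp
  next
    case False then show ?thesis using ip_sg[OF u gen] LOG_unit[OF gen] ip_scale[of "ln s" "sg s"]
      by (intro exI[of _ 0]) simp
  qed
  then show ?case using s by auto
next
  case (mult x y)
  have xy: "x * y \<in> L" "x * y \<noteq> 0" using mult.IH sf_mult[OF sf] by auto
  have "\<exists>k::int. ip (LOG L (x * y)) (sg u) = of_int k * (real (card P) * ln u)" if u: "u \<in> U" for u
  proof -
    obtain k1 where k1: "ip (LOG L x) (sg u) = of_int k1 * (real (card P) * ln u)" using mult.IH(1) u by blast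
    obtain k2 where k2: "ip (LOG L y) (sg u) = of_int k2 * (real (card P) * ln u)" using mult.IH(2) u by blast
    have "ip (LOG L (x * y)) (sg u) = of_int (k1 + k2) * (real (card P) * ln u)"
      using LOG_mult[of x y] mult.IH k1 k2 by (simp add: ip_add algebra_simps)
    then show ?thesis by blast
  qed
  then show ?case using xy by blast
next
  case (inv x)
  have xi: "inverse x \<in> L" "inverse x \<noteq> 0" using inv.IH sf_inverse[OF sf] by auto
  have "\<exists>k::int. ip (LOG L (inverse x)) (sg u) = of_int k * (real (card P) * ln u)" if u: "u \<in> U" for u
  proof -
    obtain k1 where k1: "ip (LOG L x) (sg u) = of_int k1 * (real (card P) * ln u)" using inv.IH u by blast
    have "ip (LOG L (inverse x)) (sg u) = of_int (- k1) * (real (card P) * ln u)"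
      using LOG_inv[of x] inv.IH k1 by (simp add: ip_neg)
    then show ?thesis by blast
  qed
  then show ?case using xi by blast
qed

lemma IP2_wedge: "IP2 (wedge a b) (wedge c d) = 2 * (ip a c * ip b d - ip a d * ip b c)"
proof -
  have "IP2 (wedge a b) (wedge c d) = (\<Sum>v1\<in>P. \<Sum>v2\<in>P. (a v1*c v1)*(b v2*d v2) - (a v1*d v1)*(b v2*c v2)
      - (b v1*c v1)*(a v2*d v2) + (b v1*d v1)*(a v2*c v2))"
    unfolding IP2_def wedge_def by (intro sum.cong refl) (simp add: algebra_simps)
  also have "\<dots> = (\<Sum>v1\<in>P. \<Sum>v2\<in>P. (a v1*c v1)*(b v2*d v2)) - (\<Sum>v1\<in>P. \<Sum>v2\<in>P. (a v1*d v1)*(b v2*c v2))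
      - (\<Sum>v1\<in>P. \<Sum>v2\<in>P. (b v1*c v1)*(a v2*d v2)) + (\<Sum>v1\<in>P. \<Sum>v2\<in>P. (b v1*d v1)*(a v2*c v2))"
    by (simp only: sum.distrib sum_subtractf)
  also have "\<dots> = ip a c * ip b d - ip a d * ip b c - ip b c * ip a d + ip b d * ip a c"
    by (simp only: ip_def sum_product)
  finally show ?thesis by (simp add: algebra_simps)
qed

lemma IP2_add: "IP2 (x + y) z = IP2 x z + IP2 y z"
  unfolding IP2_def by (simp add: distrib_right sum.distrib)
lemma IP2_neg: "IP2 (- x) z = - IP2 x z"
  unfolding IP2_def by (simp add: sum_negf)
lemma IP2_zero: "IP2 0 z = 0"
  unfolding IP2_def by simp
lemma IP2_addL: "IP2 (\<lambda>a b. x a b + y a b) z = IP2 x z + IP2 y z"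
  unfolding IP2_def by (simp add: distrib_right sum.distrib)
lemma IP2_negL: "IP2 (\<lambda>a b. - x a b) z = - IP2 x z"
  unfolding IP2_def by (simp add: sum_negf)
lemma IP2_add2L: "IP2 w (\<lambda>a b. x a b + y a b) = IP2 w x + IP2 w y"
  unfolding IP2_def by (simp add: distrib_left sum.distrib)
lemma IP2_neg2L: "IP2 w (\<lambda>a b. - x a b) = - IP2 w x"
  unfolding IP2_def by (simp add: sum_negf)
lemma IP2_add2: "IP2 w (x + y) = IP2 w x + IP2 w y"
  unfolding IP2_def by (simp add: distrib_left sum.distrib)
lemma IP2_neg2: "IP2 w (- x) = - IP2 w x"
  unfolding IP2_def by (simp add: sum_negf)
lemma IP2_zero2: "IP2 w 0 = 0"
  unfolding IP2_def by simp

lemma W_int: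
  assumes w: "w \<in> wedge2_LOG L (mult_subgroup_gen U)" and u: "u \<in> U" "u' \<in> U"
  shows "\<exists>k::int. IP2 w (wedge (sg u) (sg u')) = of_int k * (2 * real (card P)^2 * ln u * ln u')"
  using w unfolding wedge2_LOG_def
proof (induction rule: add_subgroup_gen.induct)
  case zero then show ?case by (auto simp: IP2_def intro!: exI[of _ 0])
next
  case (gen s)
  then obtain e1 e2 where e: "s = wedge (LOG L e1) (LOG L e2)" "e1 \<in> mult_subgroup_gen U" "e2 \<in> mult_subgroup_gen U"
    by blast
  define N where "N = real (card P)"
  obtain k1 where k1: "ip (LOG L e1) (sg u) = of_int k1 * (N * ln u)" using E_props[OF e(2)] u N_def by blast
  obtain k1' where k1': "ip (LOG L e1) (sg u') = of_int k1' * (N * ln u')" using E_props[OF e(2)] u N_def by blast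
  obtain k2 where k2: "ip (LOG L e2) (sg u) = of_int k2 * (N * ln u)" using E_props[OF e(3)] u N_def by blast
  obtain k2' where k2': "ip (LOG L e2) (sg u') = of_int k2' * (N * ln u')" using E_props[OF e(3)] u N_def by blast
  have "IP2 s (wedge (sg u) (sg u')) = of_int (k1 * k2' - k1' * k2) * (2 * N^2 * ln u * ln u')"
    unfolding e(1) IP2_wedge k1 k1' k2 k2' by (simp add: algebra_simps power2_eq_square)
  then show ?case by (intro exI[of _ "k1 * k2' - k1' * k2"]) (simp add: N_def)
next
  case (add x y)
  then obtain kx ky where h: "IP2 x (wedge (sg u) (sg u')) = of_int kx * (2 * real (card P)^2 * ln u * ln u')"
    "IP2 y (wedge (sg u) (sg u')) = of_int ky * (2 * real (card P)^2 * ln u * ln u')" by blast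
  have "IP2 (x + y) (wedge (sg u) (sg u')) = IP2 x (wedge (sg u) (sg u')) + IP2 y (wedge (sg u) (sg u'))"
    by (rule IP2_add)
  then show ?case using h by (intro exI[of _ "kx + ky"]) (simp add: algebra_simps IP2_addL)
next
  case (neg x)
  then obtain kx where h: "IP2 x (wedge (sg u) (sg u')) = of_int kx * (2 * real (card P)^2 * ln u * ln u')" by blast
  have "IP2 (- x) (wedge (sg u) (sg u')) = - IP2 x (wedge (sg u) (sg u'))" by (rule IP2_neg)
  then show ?case using h by (intro exI[of _ "- kx"]) (simp add: IP2_negL)
qed

lemma W_bound:
  "\<bar>IP2 w (wedge (sg u) (sg u'))\<bar> \<le> 4 * wedge_norm1 P w"
proof -
  have zb: "\<bar>wedge (sg u) (sg u') v1 v2\<bar> \<le> 2" for v1 v2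
  proof -
    have "\<bar>sg u v1 * sg u' v2\<bar> \<le> 1" "\<bar>sg u v2 * sg u' v1\<bar> \<le> 1"
      using sg_abs by (auto simp: abs_mult intro: mult_le_one)
    then show ?thesis unfolding wedge_def by linarith
  qed
  have "\<bar>IP2 w (wedge (sg u) (sg u'))\<bar> \<le> (\<Sum>v1\<in>P. \<bar>\<Sum>v2\<in>P. w v1 v2 * wedge (sg u) (sg u') v1 v2\<bar>)"
    unfolding IP2_def by (rule sum_abs)
  also have "\<dots> \<le> (\<Sum>v1\<in>P. \<Sum>v2\<in>P. \<bar>w v1 v2 * wedge (sg u) (sg u') v1 v2\<bar>)"
    by (intro sum_mono sum_abs)
  also have "\<dots> \<le> (\<Sum>v1\<in>P. \<Sum>v2\<in>P. \<bar>w v1 v2\<bar> * 2)"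
    by (intro sum_mono) (simp add: abs_mult mult_left_mono zb)
  also have "\<dots> = (\<Sum>v1\<in>P. \<Sum>v2\<in>P. \<bar>w v1 v2\<bar>) * 2"
    by (simp add: sum_distrib_right)
  also have "\<dots> = 4 * wedge_norm1 P w"
    by (simp add: wedge_norm1_def)
  finally show ?thesis .
qed

lemma LOG_vanish: "v \<notin> P \<Longrightarrow> LOG L e v = 0" by (rule LOG_out)

lemma W_out:
  assumes "w \<in> wedge2_LOG L E" "v1 \<notin> P \<or> v2 \<notin> P"
  shows "w v1 v2 = 0"
  using assms(1) unfolding wedge2_LOG_def
proof (induction rule: add_subgroup_gen.induct)
  case (gen s)
  then show ?case using assms(2) by (auto simp: wedge_def LOG_out)
qed auto

lemma W_nonzero:
  assumes w: "w \<in> wedge2_LOG L (mult_subgroup_gen U)" and w0: "w \<noteq> 0"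
  shows "\<exists>u\<in>U. \<exists>u'\<in>U. IP2 w (wedge (sg u) (sg u')) \<noteq> 0"
proof (rule ccontr)
  assume "\<not> ?thesis"
  then have hyp: "\<And>u u'. u \<in> U \<Longrightarrow> u' \<in> U \<Longrightarrow> IP2 w (wedge (sg u) (sg u')) = 0" by blast
  have lin1: "IP2 w (wedge (\<lambda>v. c1 * a v + c2 * a' v) b) = c1 * IP2 w (wedge a b) + c2 * IP2 w (wedge a' b)"
    for c1 c2 a a' b
  proof -
    have "IP2 w (wedge (\<lambda>v. c1 * a v + c2 * a' v) b) = (\<Sum>v1\<in>P. \<Sum>v2\<in>P.
        c1 * (w v1 v2 * wedge a b v1 v2) + c2 * (w v1 v2 * wedge a' b v1 v2))"
      unfolding IP2_def wedge_def by (intro sum.cong refl) (simp add: algebra_simps)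
    also have "\<dots> = c1 * IP2 w (wedge a b) + c2 * IP2 w (wedge a' b)"
      unfolding IP2_def by (simp add: sum.distrib sum_distrib_left)
    finally show ?thesis .
  qed
  have lin2: "IP2 w (wedge a (\<lambda>v. c1 * b v + c2 * b' v)) = c1 * IP2 w (wedge a b) + c2 * IP2 w (wedge a b')"
    for c1 c2 a b b'
  proof -
    have "IP2 w (wedge a (\<lambda>v. c1 * b v + c2 * b' v)) = (\<Sum>v1\<in>P. \<Sum>v2\<in>P.
        c1 * (w v1 v2 * wedge a b v1 v2) + c2 * (w v1 v2 * wedge a b' v1 v2))"
      unfolding IP2_def wedge_def by (intro sum.cong refl) (simp add: algebra_simps)
    also have "\<dots> = c1 * IP2 w (wedge a b) + c2 * IP2 w (wedge a b')"
      unfolding IP2_def by (simp add: sum.distrib sum_distrib_left)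
    finally show ?thesis .
  qed
  have c1: "e \<in> L \<and> e \<noteq> 0 \<and> (\<forall>u\<in>U. IP2 w (wedge (LOG L e) (sg u)) = 0)" if "e \<in> mult_subgroup_gen U" for e
    using that
  proof (induction rule: mult_subgroup_gen.induct)
    case one
    have "IP2 w (wedge (\<lambda>v. 0 * (\<lambda>v. 0) v + 0 * (\<lambda>v. 0) v) b) = 0" for b by (subst lin1) simp
    then show ?case using sf_1[OF sf] by (simp add: LOG_1)
  next
    case (gen s)
    have s: "s \<in> L" "s > 1" using U_props[OF gen] by auto
    have "IP2 w (wedge (\<lambda>v. ln s * sg s v + 0 * sg s v) (sg u)) = 0" if "u \<in> U" for u
      by (subst lin1) (simp add: hyp[OF gen that])
    then show ?case using s LOG_unit[OF gen] by simp
  next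
    case (mult x y)
    have xy: "x * y \<in> L" "x * y \<noteq> 0" using mult.IH sf_mult[OF sf] by auto
    have "IP2 w (wedge (\<lambda>v. 1 * LOG L x v + 1 * LOG L y v) (sg u)) = 0" if "u \<in> U" for u
      by (subst lin1) (use mult.IH that in simp)
    then show ?case using xy LOG_mult[of x y] mult.IH by simp
  next
    case (inv x)
    have xi: "inverse x \<in> L" "inverse x \<noteq> 0" using inv.IH sf_inverse[OF sf] by auto
    have "IP2 w (wedge (\<lambda>v. (-1) * LOG L x v + 0 * LOG L x v) (sg u)) = 0" if "u \<in> U" for u
      by (subst lin1) (use inv.IH that in simp)
    then show ?case using xi LOG_inv[of x] inv.IH by simp
  qed
  have c2: "IP2 w (wedge (LOG L e1) (LOG L e)) = 0"
    if e1: "e1 \<in> mult_subgroup_gen U" and e: "e \<in> mult_subgroup_gen U" for e1 e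
    using e
  proof (induction rule: mult_subgroup_gen.induct)
    case one
    have "IP2 w (wedge a (\<lambda>v. 0 * (\<lambda>v. 0) v + 0 * (\<lambda>v. 0) v)) = 0" for a by (subst lin2) simp
    then show ?case by (simp add: LOG_1)
  next
    case (gen s)
    have "IP2 w (wedge (LOG L e1) (\<lambda>v. ln s * sg s v + 0 * sg s v)) = 0"
      by (subst lin2) (use c1[OF e1] gen in simp)
    then show ?case using LOG_unit[OF gen] by simp
  next
    case (mult x y)
    have "IP2 w (wedge (LOG L e1) (\<lambda>v. 1 * LOG L x v + 1 * LOG L y v)) = 0"
      by (subst lin2) (use mult.IH in simp)
    then show ?case using LOG_mult[of x y] c1[OF mult.hyps(1)] c1[OF mult.hyps(2)] by simp
  next
    case (inv x)
    have "IP2 w (wedge (LOG L e1) (\<lambda>v. (-1) * LOG L x v + 0 * LOG L x v)) = 0"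
      by (subst lin2) (use inv.IH in simp)
    then show ?case using LOG_inv[of x] c1[OF inv.hyps] by simp
  qed
  have c3: "IP2 w w' = 0" if "w' \<in> wedge2_LOG L (mult_subgroup_gen U)" for w'
    using that unfolding wedge2_LOG_def
  proof (induction rule: add_subgroup_gen.induct)
    case zero then show ?case by (simp add: IP2_def)
  next
    case (gen s) then show ?case using c2 by auto
  next
    case (add x y)
    have "IP2 w (x + y) = IP2 w x + IP2 w y" by (rule IP2_add2)
    then show ?case using add.IH by (simp add: IP2_add2L)
  next
    case (neg x)
    have "IP2 w (- x) = - IP2 w x" by (rule IP2_neg2)
    then show ?case using neg.IH by (simp add: IP2_neg2L)
  qed
  have "IP2 w w = 0" using c3[OF w] .
  then have "(\<Sum>v1\<in>P. \<Sum>v2\<in>P. (w v1 v2)^2) = 0" by (simp add: IP2_def power2_eq_square)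
  then have "\<forall>v1\<in>P. (\<Sum>v2\<in>P. (w v1 v2)^2) = 0"
    using finP by (subst (asm) sum_nonneg_eq_0_iff) (auto intro: sum_nonneg)
  then have inP: "\<forall>v1\<in>P. \<forall>v2\<in>P. w v1 v2 = 0"
    using finP by (subst (asm) sum_nonneg_eq_0_iff) auto
  have "w = 0"
  proof (intro ext)
    fix v1 v2
    show "w v1 v2 = 0 v1 v2"
      using inP W_out[OF w, of v1 v2] by (cases "v1 \<in> P \<and> v2 \<in> P") auto
  qed
  then show False using w0 by simp
qed

end

context mth begin

lemma wedge_self: "wedge a a = (\<lambda>v1 v2. 0)"
  by (simp add: wedge_def fun_eq_iff mult.commute)

lemma final_bound:
  assumes w: "w \<in> wedge2_LOG L (fundamental_unit_group L)" and w0: "w \<noteq> 0"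
    and n: "2^n \<le> card P" "n \<ge> 1"
  shows "wedge_norm1 (arch_places L) w \<ge> 2 ^ (2 * n - 1) * ln ((1 + sqrt 5) / 2) * ln (1 + sqrt 2)"
proof -
  have wE: "w \<in> wedge2_LOG L (mult_subgroup_gen U)" using w by (simp add: fundamental_unit_group_def U_def)
  obtain u u' where uu: "u \<in> U" "u' \<in> U" and ne0: "IP2 w (wedge (sg u) (sg u')) \<noteq> 0"
    using W_nonzero[OF wE w0] by blast
  have ne: "u \<noteq> u'"
  proof
    assume "u = u'"
    then have "IP2 w (wedge (sg u) (sg u')) = 0" by (simp add: wedge_self IP2_def)
    then show False using ne0 by simp
  qed
  define N where "N = real (card P)"
  obtain k where k: "IP2 w (wedge (sg u) (sg u')) = of_int k * (2 * N^2 * ln u * ln u')"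
    using W_int[OF wE uu] N_def by blast
  have k0: "k \<noteq> 0" using k ne0 by auto
  obtain A Bn where AB: "Bn = 1 \<or> Bn = -1" "u^2 = of_int A * u + of_int Bn" using U_props(4)[OF uu(1)] by blast
  obtain A' Bn' where AB': "Bn' = 1 \<or> Bn' = -1" "u'^2 = of_int A' * u' + of_int Bn'" using U_props(4)[OF uu(2)] by blast
  have u1: "u > 1" "u' > 1" using U_props uu by auto
  have b1: "u \<ge> phi" "u = phi \<or> u \<ge> 1 + sqrt 2" using unit_bounds[OF u1(1) AB(2) AB(1)] by auto
  have b2: "u' \<ge> phi" "u' = phi \<or> u' \<ge> 1 + sqrt 2" using unit_bounds[OF u1(2) AB'(2) AB'(1)] by auto
  have s5: "sqrt 5 > 1" by simp
  have ph1: "phi > 1" using s5 by (simp add: phi_def)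
  have s2: "1 + sqrt 2 > 1" by simp
  have lp: "ln phi > 0" using ph1 by simp
  have l2: "ln (1 + sqrt 2) > 0" by (rule ln_gt_zero[OF s2])
  have p2: "0 < 1 + sqrt 2" by (simp add: add_pos_nonneg)
  have mono: "1 + sqrt 2 \<le> x \<Longrightarrow> ln (1 + sqrt 2) \<le> ln x" for x
  proof -
    assume x: "1 + sqrt 2 \<le> x"
    then have "0 < x" using p2 by linarith
    then show ?thesis using x p2 by (subst ln_le_cancel_iff) auto
  qed
  have lnu: "ln u \<ge> ln phi" "ln u' \<ge> ln phi" using b1 b2 ph1 by auto
  have key: "ln u * ln u' \<ge> ln phi * ln (1 + sqrt 2)"
  proof (cases "u \<ge> 1 + sqrt 2")
    case True
    then have "ln u \<ge> ln (1 + sqrt 2)" by (rule mono)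
    then have "ln u * ln u' \<ge> ln (1 + sqrt 2) * ln phi"
      using lnu lp l2 by (intro mult_mono) auto
    then show ?thesis by (simp add: mult.commute)
  next
    case False
    then have "u = phi" using b1 by auto
    then have "u' \<noteq> phi" using ne by auto
    then have "u' \<ge> 1 + sqrt 2" using b2 by auto
    then have "ln u' \<ge> ln (1 + sqrt 2)" by (rule mono)
    then show ?thesis using lnu lp l2 by (intro mult_mono) auto
  qed
  have pos: "ln u * ln u' > 0" using u1 by simp
  have "\<bar>IP2 w (wedge (sg u) (sg u'))\<bar> = \<bar>of_int k\<bar> * (2 * N^2 * ln u * ln u')"
    using k u1 by (simp add: abs_mult)
  also have "\<dots> \<ge> 1 * (2 * N^2 * ln u * ln u')"
    using k0 pos by (intro mult_right_mono) (auto simp: mult.assoc)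
  finally have f1: "1 * (2 * N^2 * ln u * ln u') \<le> \<bar>IP2 w (wedge (sg u) (sg u'))\<bar>" .
  have f2: "\<bar>IP2 w (wedge (sg u) (sg u'))\<bar> \<le> 4 * wedge_norm1 P w" by (rule W_bound)
  have eq1: "1 * (2 * N^2 * ln u * ln u') = 2 * (N^2 * (ln u * ln u'))" by simp
  have eq2: "N^2 / 2 * (ln u * ln u') = (N^2 * (ln u * ln u')) / 2" by simp
  have wn: "wedge_norm1 P w \<ge> N^2 / 2 * (ln u * ln u')" using f1 f2 eq1 eq2 by linarith
  have "N \<ge> 2^n" using n(1) by (simp add: N_def)
  then have "N^2 \<ge> (2^n)^2" by (intro power_mono) auto
  also have "((2::real)^n)^2 = 2 ^ (2*n)" by (subst power_mult[symmetric]) (simp add: mult.commute)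
  finally have N2: "N^2 / 2 \<ge> 2 ^ (2*n - 1)"
    using n(2) by (cases n) (auto simp: field_simps)
  have "2 ^ (2 * n - 1) * ln ((1 + sqrt 5) / 2) * ln (1 + sqrt 2) = 2 ^ (2*n - 1) * (ln phi * ln (1 + sqrt 2))"
    by (simp add: phi_def mult.assoc)
  also have "\<dots> \<le> N^2 / 2 * (ln u * ln u')"
    by (rule mult_mono[OF N2 key]) (use lp l2 in auto)
  also have "\<dots> \<le> wedge_norm1 P w" by (rule wn)
  finally show ?thesis by (simp add: P_def)
qed

end

theorem mainTheorem5:
  fixes n :: nat and L :: "real set" and w :: "(real \<Rightarrow> complex) set \<Rightarrow> (real \<Rightarrow> complex) set \<Rightarrow> real"
  assumes "n \<ge> 2"
    and "number_field L"
    and "totally_real L"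
    and "galois_over_Q L"
    and "galois_group L \<cong> Z2_power n"
    and "w \<in> wedge2_LOG L (fundamental_unit_group L)"
    and "w \<noteq> 0"
  shows "wedge_norm1 (arch_places L) w \<ge>
           2 ^ (2 * n - 1) * ln ((1 + sqrt 5) / 2) * ln (1 + sqrt 2)"
proof -
  obtain B where B: "real_subfield L" "finite B" "Q.independent B" "Q.span B = L"
    using assms(2) unfolding number_field_def by blast
  interpret nf L B using B by unfold_locales
  have gal: "card (automorphisms L) = card B" using assms(4) dimL by (simp add: galois_over_Q_def)
  interpret mth L B using assms(3) gal by unfold_locales
  have "card (carrier (galois_group L)) = card (carrier (Z2_power n))" using iso_same_card[OF assms(5)] .
  also have "card (carrier (Z2_power n)) = 2 ^ n"
    by (simp add: Z2_power_def carrier_integer_mod_group card_PiE)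
  finally have "card (automorphisms L) = 2 ^ n" by (simp add: galois_group_def)
  then have "2 ^ n \<le> card P" using card_Aut_le by simp
  then show ?thesis using final_bound[OF assms(6) assms(7)] assms(1) by simp
qed

end
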